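(* For $x\in\mathfrak S_G$, $W\in S_\infty(G)\times S_\infty(G)$ and $c\in[G]$, the quantity $[p_n(xW)](c)-[p_n(x)](c)$ does not depend on $n$, provided $n$ is large enough that $W\in S_n(G)\times S_n(G)$. (Its common value is denoted $C_c(x,W)$.)
   Context: $G$ compact; $[G]$ its conjugacy classes. $S_n(G)=G^n\rtimes S_n$, elements $((g_1,\dots,g_n),s)$, product $((g_i),s)((h_i),t)=((g_ih_{s^{-1}(i)}),st)$. For $x=((g_i),s)$, the color of a cycle $(i_1\cdots i_r)$ of $s$ is the conjugacy class of $g_{i_r}\cdots g_{i_1}$; $[x](c)$ = number of cycles of color $c$. Canonical projection $p_{n,n+1}:S_{n+1}(G)\to S_n(G)$: for $\tilde x=((g_1,\dots,g_{n+1}),\tilde s)$, if $\tilde s(n+1)=n+1$, restrict; if $n+1$ lies in a cycle $i_1\to\cdots\to i_m\to n+1\to i_{m+1}\to\cdots\to i_r$, delete $n+1$ from the cycle and replace $(g_1,\dots,g_{n+1})$ by $(g_1,\dots,g_n)$ with $g_{i_{m+1}}$ replaced by $g_{i_{m+1}}g_{n+1}$. $\mathfrak S_G=\varprojlim S_n(G)$ is the set of sequences $x=(x_1,x_2,\dots)$, $x_n\in S_n(G)$, $p_{n,n+1}(x_{n+1})=x_n$; $p_n(x)=x_n$. $S_\infty(G)=\bigcup_nS_n(G)$ via $((g_1,\dots,g_n),s)\mapsto((g_1,\dots,g_n,e_G),s)$. For $W=(w_1,w_2)\in S_\infty(G)\times S_\infty(G)$, $xW=y$ with $y_n=w_2^{-1}x_nw_1$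 for all $n$ such that $w_1,w_2\in S_n(G)$. *)

theory Defs
  imports "HOL-Analysis.Analysis" "HOL-Algebra.Group"
begin

definition compact_group :: "('a, 'b) monoid_scheme \<Rightarrow> 'a topology \<Rightarrow> bool" where
  "compact_group G T \<longleftrightarrow> group G \<and> topspace T = carrier G \<and> compact_space T
     \<and> Hausdorff_space T
     \<and> continuous_map (prod_topology T T) T (\<lambda>(a, b). a \<otimes>\<^bsub>G\<^esub> b)
     \<and> continuous_map T T (\<lambda>a. inv\<^bsub>G\<^esub> a)"

definition conjclass :: "('a, 'b) monoid_scheme \<Rightarrow> 'a \<Rightarrow> 'a set" where
  "conjclass G a = {h \<otimes>\<^bsub>G\<^esub> a \<otimes>\<^bsub>G\<^esub> inv\<^bsub>G\<^esub> h | h. h \<in> carrier G}"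

definition conj_classes :: "('a, 'b) monoid_scheme \<Rightarrow> 'a set set" where
  "conj_classes G = conjclass G ` carrier G"

(* Elements of S_n(G) = G^n \<rtimes> S_n, represented as pairs (g, s) with
   g :: nat \<Rightarrow> 'a (the tuple (g_1,...,g_n), extended by e_G outside {1..n}) and
   s a permutation of {1..n} (identity outside).  With this representation the
   embedding S_n(G) \<subseteq> S_{n+1}(G), ((g_1..g_n),s) \<mapsto> ((g_1..g_n,e),s), is literal inclusion. *)
type_synonym 'a wr = "(nat \<Rightarrow> 'a) \<times> (nat \<Rightarrow> nat)"

definition Sn :: "('a, 'b) monoid_scheme \<Rightarrow> nat \<Rightarrow> 'a wr set" where
  "Sn G n = {(g, s). s permutes {1..n} \<and> (\<forall>i\<in>{1..n}. g i \<in> carrier G)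
                     \<and> (\<forall>i. i \<notin> {1..n} \<longrightarrow> g i = \<one>\<^bsub>G\<^esub>)}"

definition Sinf :: "('a, 'b) monoid_scheme \<Rightarrow> 'a wr set" where
  "Sinf G = (\<Union>n. Sn G n)"

definition wr_mult :: "('a, 'b) monoid_scheme \<Rightarrow> 'a wr \<Rightarrow> 'a wr \<Rightarrow> 'a wr" where
  "wr_mult G x y = (\<lambda>i. fst x i \<otimes>\<^bsub>G\<^esub> fst y (Hilbert_Choice.inv (snd x) i), snd x \<circ> snd y)"

definition wr_inv :: "('a, 'b) monoid_scheme \<Rightarrow> 'a wr \<Rightarrow> 'a wr" where
  "wr_inv G x = (\<lambda>j. inv\<^bsub>G\<^esub> (fst x (snd x j)), Hilbert_Choice.inv (snd x))"

definition cyclen :: "(nat \<Rightarrow> nat) \<Rightarrow> nat \<Rightarrow> nat" where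
  "cyclen s i = (LEAST r. 0 < r \<and> (s ^^ r) i = i)"

primrec cprod :: "('a, 'b) monoid_scheme \<Rightarrow> (nat \<Rightarrow> 'a) \<Rightarrow> (nat \<Rightarrow> nat) \<Rightarrow> nat \<Rightarrow> nat \<Rightarrow> 'a" where
  "cprod G g s i 0 = \<one>\<^bsub>G\<^esub>"
| "cprod G g s i (Suc k) = g ((s ^^ k) i) \<otimes>\<^bsub>G\<^esub> cprod G g s i k"

definition cycle_of :: "(nat \<Rightarrow> nat) \<Rightarrow> nat \<Rightarrow> nat set" where
  "cycle_of s i = {(s ^^ k) i | k. True}"

definition cycle_color :: "('a, 'b) monoid_scheme \<Rightarrow> 'a wr \<Rightarrow> nat \<Rightarrow> 'a set" where
  "cycle_color G x i = conjclass G (cprod G (fst x) (snd x) i (cyclen (snd x) i))"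

definition cnt :: "('a, 'b) monoid_scheme \<Rightarrow> nat \<Rightarrow> 'a wr \<Rightarrow> 'a set \<Rightarrow> nat" where
  "cnt G n x c = card {C. \<exists>i\<in>{1..n}. C = cycle_of (snd x) i \<and> cycle_color G x i = c}"

definition proj :: "('a, 'b) monoid_scheme \<Rightarrow> nat \<Rightarrow> 'a wr \<Rightarrow> 'a wr" where
  "proj G n x =
    (let g = fst x; s = snd x in
     if s (n+1) = n+1 then (g(n+1 := \<one>\<^bsub>G\<^esub>), s)
     else (let a = Hilbert_Choice.inv s (n+1); b = s (n+1) in
           ((g(b := g b \<otimes>\<^bsub>G\<^esub> g (n+1)))(n+1 := \<one>\<^bsub>G\<^esub>), (s(a := b))(n+1 := n+1))))"

(* \<frak>S_G = inverse limit; sequences indexed by n \<ge> 1 (the value at 0 is irrelevant) *)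
definition frakS :: "('a, 'b) monoid_scheme \<Rightarrow> (nat \<Rightarrow> 'a wr) set" where
  "frakS G = {x. (\<forall>n\<ge>1. x n \<in> Sn G n) \<and> (\<forall>n\<ge>1. proj G n (x (n+1)) = x n)}"

definition act :: "('a, 'b) monoid_scheme \<Rightarrow> (nat \<Rightarrow> 'a wr) \<Rightarrow> 'a wr \<times> 'a wr \<Rightarrow> (nat \<Rightarrow> 'a wr)" where
  "act G x W = (THE y. y \<in> frakS G \<and> y 0 = x 0 \<and>
      (\<forall>n\<ge>1. fst W \<in> Sn G n \<and> snd W \<in> Sn G n \<longrightarrow>
               y n = wr_mult G (wr_mult G (wr_inv G (snd W)) (x n)) (fst W)))"

end

theory Submission
  imports Defs
begin

lemma funpow_add_apply: "(f^^(m+n)) x = (f^^m) ((f^^n) x)"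
  by (simp add: funpow_add)

lemma funpow_perm_mem:
  assumes "(s::nat\<Rightarrow>nat) permutes {1..N}" shows "(s^^k) i \<in> insert i {1..N}"
proof (induction k)
  case 0 then show ?case by simp
next
  case (Suc k)
  then show ?case
    using permutes_in_image[OF assms] permutes_not_in[OF assms] by (auto simp del: atLeastAtMost_iff)
qed

lemma perm_period:
  assumes "(s::nat\<Rightarrow>nat) permutes {1..N}" shows "\<exists>r>0. (s^^r) i = i"
proof -
  have "inj s" using assms by (rule permutes_inj)
  moreover have "{y. \<exists>n. y = (s ^^ n) i} \<subseteq> insert i {1..N}"
    using funpow_perm_mem[OF assms] by blast
  then have "finite {y. \<exists>n. y = (s ^^ n) i}" by (rule finite_subset) auto
  ultimately obtain n where "n > 0" "(s ^^ n) i = i" by (rule funpow_inj_finite)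
  then show ?thesis by blast
qed

lemma cyclen_props:
  assumes "s permutes {1..N}" shows "0 < cyclen s i" "(s^^cyclen s i) i = i"
proof -
  have "\<exists>r. 0 < r \<and> (s^^r) i = i" using perm_period[OF assms] by blast
  from LeastI_ex[OF this] show "0 < cyclen s i" "(s^^cyclen s i) i = i"
    unfolding cyclen_def by auto
qed

lemma cyclen_min: "0 < k \<Longrightarrow> k < cyclen s i \<Longrightarrow> (s^^k) i \<noteq> i"
  unfolding cyclen_def using not_less_Least by blast

lemma funpow_period_mult: "(s^^L) i = i \<Longrightarrow> (s^^(L*t)) i = i"
proof (induction t)
  case 0 then show ?case by simp
next
  case (Suc t)
  have "L * Suc t = L*t + L" by simp
  then have "(s^^(L*Suc t)) i = (s^^(L*t)) ((s^^L) i)" by (simp only: funpow_add o_apply)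
  then show ?case using Suc by simp
qed

lemma funpow_mod_period: "(s^^L) i = i \<Longrightarrow> (s^^m) i = (s^^(m mod L)) i"
proof -
  assume h: "(s^^L) i = i"
  have "(s^^m) i = (s^^(m mod L)) ((s^^(L*(m div L))) i)"
    by (metis funpow_add o_apply mod_mult_div_eq mult.commute)
  then show ?thesis using funpow_period_mult[OF h] by simp
qed

lemma cycle_of_alt:
  assumes "0 < L" "(s^^L) i = i" shows "cycle_of s i = {(s^^k) i | k. k < L}"
proof -
  have "\<exists>k'. (s^^k) i = (s^^k') i \<and> k' < L" for k
    using funpow_mod_period[OF assms(2), of k] assms(1) by auto
  then show ?thesis unfolding cycle_of_def by auto
qed

lemma cycle_of_funpow:
  assumes "s permutes {1..N}" shows "cycle_of s ((s^^k) i) = cycle_of s i"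
proof -
  let ?L = "cyclen s i"
  note c = cyclen_props[OF assms, of i]
  show ?thesis
  proof
    show "cycle_of s ((s^^k) i) \<subseteq> cycle_of s i"
      unfolding cycle_of_def by (auto simp: funpow_add_apply[symmetric] simp del: funpow_add)
  next
    show "cycle_of s i \<subseteq> cycle_of s ((s^^k) i)"
    proof
      fix j assume "j \<in> cycle_of s i"
      then obtain m where m: "j = (s^^m) i" unfolding cycle_of_def by auto
      have "k \<le> ?L * k" using c(1) by simp
      have "(s^^(m + ?L*k - k)) ((s^^k) i) = (s^^(m + ?L*k)) i"
      proof -
        have e: "m + ?L*k - k + k = m + ?L*k" using \<open>k \<le> ?L * k\<close> by linarith
        show ?thesis using funpow_add_apply[where f=s and m="m + ?L*k - k" and n=k and x=i] unfolding e by simp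
      qed
      also have "\<dots> = (s^^m) ((s^^(?L*k)) i)" by (simp add: funpow_add_apply)
      also have "\<dots> = j" using funpow_period_mult[OF c(2)] m by simp
      finally show "j \<in> cycle_of s ((s^^k) i)" unfolding cycle_of_def by blast
    qed
  qed
qed

lemma cycle_of_mem:
  assumes "s permutes {1..N}" "j \<in> cycle_of s i" shows "cycle_of s j = cycle_of s i"
proof -
  obtain k where "j = (s^^k) i" using assms(2) unfolding cycle_of_def by auto
  then show ?thesis using cycle_of_funpow[OF assms(1)] by simp
qed

lemma self_in_cycle_of: "i \<in> cycle_of s i"
  unfolding cycle_of_def by (auto intro: exI[of _ 0])

lemma cyclen_step:
  assumes "inj s" shows "cyclen s (s i) = cyclen s i"
proof -
  have "(s^^r) (s i) = s i \<longleftrightarrow> (s^^r) i = i" for r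
    using assms by (metis funpow_swap1 injD)
  then show ?thesis unfolding cyclen_def by simp
qed

lemma cyclen_funpow:
  assumes "inj s" shows "cyclen s ((s^^k) i) = cyclen s i"
  by (induction k) (simp_all add: cyclen_step[OF assms])

lemma funpow_distinct:
  assumes "s permutes {1..N}" "k1 < cyclen s i" "k2 < cyclen s i" "(s^^k1) i = (s^^k2) i"
  shows "k1 = k2"
proof (rule ccontr)
  assume ne: "k1 \<noteq> k2"
  have inj: "inj (s^^k)" for k using permutes_inj[OF assms(1)] by simp
  have *: "(s^^(k2-k1)) i \<noteq> i" if "k1 < k2" "k2 < cyclen s i" for k1 k2
    using cyclen_min[of "k2-k1" s i] that by simp
  have **: "(s^^k1) i = (s^^k2) i \<Longrightarrow> k1 < k2 \<Longrightarrow> (s^^(k2-k1)) i = i" for k1 k2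
  proof -
    assume "(s^^k1) i = (s^^k2) i" "k1 < k2"
    then have "(s^^k1) i = (s^^k1) ((s^^(k2-k1)) i)"
      by (simp add: funpow_add_apply[symmetric] del: funpow_add)
    then show ?thesis using inj[of k1] by (simp add: inj_eq)
  qed
  show False
  proof (cases "k1 < k2")
    case True then show ?thesis using * ** assms by blast
  next
    case False then have "k2 < k1" using ne by simp
    then show ?thesis using *[of k2 k1] **[of k2 k1] assms by metis
  qed
qed

context group begin

lemma Sn_props:
  assumes "(g,s) \<in> Sn G N" shows "s permutes {1..N}" "g i \<in> carrier G"
  using assms unfolding Sn_def by (simp, cases "i \<in> {1..N}", auto)

lemma inv_cancel_l: "x \<in> carrier G \<Longrightarrow> y \<in> carrier G \<Longrightarrow> inv x \<otimes> (x \<otimes> y) = y"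
  by (simp add: m_assoc[symmetric])

lemma inv_cancel_l': "x \<in> carrier G \<Longrightarrow> y \<in> carrier G \<Longrightarrow> x \<otimes> (inv x \<otimes> y) = y"
  by (simp add: m_assoc[symmetric])

lemma cprod_carrier: "\<forall>i. g i \<in> carrier G \<Longrightarrow> cprod G g s i k \<in> carrier G"
  by (induction k) auto

lemma cprod_Suc':
  assumes "\<forall>i. g i \<in> carrier G" shows "cprod G g s i (Suc k) = cprod G g s (s i) k \<otimes> g i"
proof (induction k)
  case 0 then show ?case using assms by simp
next
  case (Suc k)
  have "cprod G g s i (Suc (Suc k)) = g ((s^^Suc k) i) \<otimes> cprod G g s i (Suc k)" by simp
  also have "\<dots> = g ((s^^k) (s i)) \<otimes> (cprod G g s (s i) k \<otimes> g i)"
    using Suc by (simp add: funpow_swap1)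
  also have "\<dots> = cprod G g s (s i) (Suc k) \<otimes> g i"
    using assms cprod_carrier[OF assms] by (simp add: m_assoc)
  finally show ?case .
qed

lemma cprod_cong:
  "(\<forall>k<K. g1 ((s1^^k) i1) = g2 ((s2^^k) i2)) \<Longrightarrow> cprod G g1 s1 i1 K = cprod G g2 s2 i2 K"
  by (induction K) auto

lemma conjclass_conj:
  assumes a: "a \<in> carrier G" and h: "h \<in> carrier G"
  shows "conjclass G (h \<otimes> a \<otimes> inv h) = conjclass G a"
proof
  show "conjclass G (h \<otimes> a \<otimes> inv h) \<subseteq> conjclass G a"
  proof
    fix y assume "y \<in> conjclass G (h \<otimes> a \<otimes> inv h)"
    then obtain k where k: "k \<in> carrier G" "y = k \<otimes> (h \<otimes> a \<otimes> inv h) \<otimes> inv k"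
      unfolding conjclass_def by auto
    then have "y = (k \<otimes> h) \<otimes> a \<otimes> inv (k \<otimes> h)"
      using a h by (simp add: m_assoc inv_mult_group)
    then show "y \<in> conjclass G a" unfolding conjclass_def using k h by blast
  qed
next
  show "conjclass G a \<subseteq> conjclass G (h \<otimes> a \<otimes> inv h)"
  proof
    fix y assume "y \<in> conjclass G a"
    then obtain k where k: "k \<in> carrier G" "y = k \<otimes> a \<otimes> inv k"
      unfolding conjclass_def by auto
    have "(k \<otimes> inv h) \<otimes> (h \<otimes> a \<otimes> inv h) \<otimes> inv (k \<otimes> inv h) = y"
      using a h k by (simp add: m_assoc inv_mult_group inv_cancel_l)
    moreover have "k \<otimes> inv h \<in> carrier G" using k h by simp
    ultimately show "y \<in> conjclass G (h \<otimes> a \<otimes> inv h)" unfolding conjclass_def by blast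
  qed
qed

lemma color_step:
  assumes s: "s permutes {1..N}" and g: "\<forall>i. g i \<in> carrier G"
  shows "cycle_color G (g,s) (s i) = cycle_color G (g,s) i"
proof -
  let ?L = "cyclen s i"
  have L: "cyclen s (s i) = ?L" using cyclen_step[OF permutes_inj[OF s]] .
  let ?P = "cprod G g s i ?L" and ?P' = "cprod G g s (s i) ?L"
  have PC: "?P \<in> carrier G" "?P' \<in> carrier G" using cprod_carrier[OF g] by auto
  have "cprod G g s i (Suc ?L) = g i \<otimes> ?P" using cyclen_props(2)[OF s, of i] by simp
  moreover have "cprod G g s i (Suc ?L) = ?P' \<otimes> g i" using cprod_Suc'[OF g] .
  ultimately have e: "?P' \<otimes> g i = g i \<otimes> ?P" by simp
  have "?P' = ?P' \<otimes> g i \<otimes> inv (g i)" using PC g by (simp add: m_assoc)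
  also have "\<dots> = g i \<otimes> ?P \<otimes> inv (g i)" using e by simp
  finally have "?P' = g i \<otimes> ?P \<otimes> inv (g i)" .
  then show ?thesis unfolding cycle_color_def using L conjclass_conj PC g by simp
qed

lemma color_funpow:
  assumes s: "s permutes {1..N}" and g: "\<forall>i. g i \<in> carrier G"
  shows "cycle_color G (g,s) ((s^^k) i) = cycle_color G (g,s) i"
  by (induction k) (simp_all add: color_step[OF s g])

lemma color_mem:
  assumes s: "s permutes {1..N}" and g: "\<forall>i. g i \<in> carrier G" and j: "j \<in> cycle_of s i"
  shows "cycle_color G (g,s) j = cycle_color G (g,s) i"
  using j color_funpow[OF s g] unfolding cycle_of_def by auto

end

lemma perm_shrink:
  assumes "s permutes {1..Suc n}" "s (Suc n) = Suc n" shows "s permutes {1..n}"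
  unfolding permutes_def
proof (intro conjI allI impI)
  fix x assume "x \<notin> {1..n}"
  then show "s x = x" using assms permutes_not_in[OF assms(1)] by (cases "x = Suc n") auto
next
  fix y show "\<exists>!x. s x = y" using assms(1) unfolding permutes_def by blast
qed

lemma funpow_fix: "s x = x \<Longrightarrow> (s^^k) x = x"
  by (induction k) auto

lemma orbit_avoid_fix:
  assumes "inj s" "s p = p" "i \<noteq> p" shows "(s^^k) i \<noteq> p"
proof (induction k)
  case 0 then show ?case using assms by simp
next
  case (Suc k)
  then show ?case using assms by (metis funpow.simps(2) o_apply injD)
qed

context group begin

lemma proj_fix: "s (Suc n) = Suc n \<Longrightarrow> proj G n (g,s) = (g(Suc n := \<one>), s)"
  by (simp add: proj_def)

lemma proj_nfix: "s (Suc n) \<noteq> Suc n \<Longrightarrow> proj G n (g,s) =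
   ((g(s (Suc n) := g (s (Suc n)) \<otimes> g (Suc n)))(Suc n := \<one>),
    (s(Hilbert_Choice.inv s (Suc n) := s (Suc n)))(Suc n := Suc n))"
  by (simp add: proj_def Let_def)

lemma s'_transpose:
  assumes s: "s permutes {1..Suc n}" and ne: "s (Suc n) \<noteq> Suc n"
  shows "(s(Hilbert_Choice.inv s (Suc n) := s (Suc n)))(Suc n := Suc n)
         = Transposition.transpose (Suc n) (s (Suc n)) \<circ> s"
proof
  fix j
  let ?a = "Hilbert_Choice.inv s (Suc n)"
  have sa: "s ?a = Suc n" using permutes_inverses(1)[OF s] .
  have inj: "inj s" using permutes_inj[OF s] .
  show "((s(?a := s (Suc n)))(Suc n := Suc n)) j = (Transposition.transpose (Suc n) (s (Suc n)) \<circ> s) j"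
  proof (cases "j = Suc n")
    case True then show ?thesis by simp
  next
    case False
    show ?thesis
    proof (cases "j = ?a")
      case True then show ?thesis using False sa by simp
    next
      case F2: False
      have "s j \<noteq> Suc n" using F2 sa inj by (metis injD)
      moreover have "s j \<noteq> s (Suc n)" using False inj by (metis injD)
      ultimately show ?thesis using False F2 by (simp add: transpose_def)
    qed
  qed
qed

lemma proj_Sn:
  assumes Z: "(g,s) \<in> Sn G (Suc n)" shows "proj G n (g,s) \<in> Sn G n"
proof -
  have s: "s permutes {1..Suc n}" and g: "\<And>i. g i \<in> carrier G" using Sn_props[OF Z] by auto
  have g1: "g i = \<one>" if "i \<notin> {1..Suc n}" for i using Z that unfolding Sn_def by auto
  show ?thesis
  proof (cases "s (Suc n) = Suc n")
    case True
    then show ?thesis using perm_shrink[OF s True] g g1 unfolding proj_fix[of s n g, OF True] Sn_def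
      by auto
  next
    case False
    let ?b = "s (Suc n)"
    have b: "?b \<in> {1..n}" using permutes_in_image[OF s, of "Suc n"] False by auto
    have p: "Transposition.transpose (Suc n) ?b \<circ> s permutes {1..Suc n}"
      by (rule permutes_compose[OF s permutes_swap_id]) (use b in auto)
    have "(Transposition.transpose (Suc n) ?b \<circ> s) (Suc n) = Suc n" by simp
    note pp = perm_shrink[OF p this]
    show ?thesis using pp g g1 b unfolding proj_nfix[of s n g, OF False] s'_transpose[OF s False] Sn_def
      by (auto simp: comp_def)
  qed
qed

end

lemma cnt_fin: "finite {C. \<exists>i\<in>{1..N}. C = cycle_of s i \<and> Q i}"
  by (rule finite_subset[of _ "cycle_of s ` {1..N::nat}"]) auto

context group begin

lemma cnt_proj_fix:
  assumes Z: "(g,s) \<in> Sn G (Suc n)" and fx: "s (Suc n) = Suc n"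
  shows "cnt G (Suc n) (g,s) c = cnt G n (proj G n (g,s)) c
           + (if conjclass G (g (Suc n)) = c then 1 else 0)"
proof -
  have s: "s permutes {1..Suc n}" and g: "\<forall>i. g i \<in> carrier G" using Sn_props[OF Z] by auto
  have inj: "inj s" using permutes_inj[OF s] .
  have col: "cycle_color G (g(Suc n := \<one>), s) i = cycle_color G (g,s) i" if "i \<in> {1..n}" for i
  proof -
    have "\<forall>k<cyclen s i. (g(Suc n := \<one>)) ((s^^k) i) = g ((s^^k) i)"
      using orbit_avoid_fix[OF inj fx, of i] that by auto
    then have "cprod G (g(Suc n := \<one>)) s i (cyclen s i) = cprod G g s i (cyclen s i)"
      by (rule cprod_cong)
    then show ?thesis unfolding cycle_color_def by simp
  qed
  define A where "A = {C. \<exists>i\<in>{1..n}. C = cycle_of s i \<and> cycle_color G (g,s) i = c}"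
  have "{C. \<exists>i\<in>{1..n}. C = cycle_of s i \<and> cycle_color G (g(Suc n := \<one>), s) i = c} = A"
    unfolding A_def by (intro Collect_cong bex_cong refl) (simp add: col)
  then have cA: "cnt G n (proj G n (g,s)) c = card A"
    unfolding cnt_def proj_fix[of s n g, OF fx] by simp
  have cyP: "cycle_of s (Suc n) = {Suc n}"
    unfolding cycle_of_def using funpow_fix[of s "Suc n", OF fx] by auto
  have clP: "cyclen s (Suc n) = Suc 0" unfolding cyclen_def using fx by (intro Least_equality) auto
  have colP: "cycle_color G (g,s) (Suc n) = conjclass G (g (Suc n))"
    unfolding cycle_color_def using g by (simp add: clP)
  have iv: "{1..Suc n} = insert (Suc n) {1..n}" by (simp add: atLeastAtMostSuc_conv)
  have B: "{C. \<exists>i\<in>{1..Suc n}. C = cycle_of s i \<and> cycle_color G (g,s) i = c}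
      = A \<union> (if conjclass G (g (Suc n)) = c then {{Suc n}} else {})"
  proof (rule Set.set_eqI)
    fix C
    have "(\<exists>i\<in>{1..Suc n}. C = cycle_of s i \<and> cycle_color G (g,s) i = c)
        \<longleftrightarrow> (C = {Suc n} \<and> conjclass G (g (Suc n)) = c) \<or> C \<in> A"
      unfolding iv A_def by (simp add: cyP colP)
    then show "C \<in> {C. \<exists>i\<in>{1..Suc n}. C = cycle_of s i \<and> cycle_color G (g,s) i = c}
      \<longleftrightarrow> C \<in> A \<union> (if conjclass G (g (Suc n)) = c then {{Suc n}} else {})"
      by (cases "conjclass G (g (Suc n)) = c") auto
  qed
  have notin: "{Suc n} \<notin> A"
  proof
    assume "{Suc n} \<in> A"
    then obtain i where "i \<in> {1..n}" "{Suc n} = cycle_of s i" unfolding A_def by auto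
    then have "i \<in> {Suc n}" using self_in_cycle_of[of i s] by simp
    then show False using \<open>i \<in> {1..n}\<close> by simp
  qed
  have fA: "finite A" unfolding A_def by (rule cnt_fin)
  have cB: "cnt G (Suc n) (g,s) c = card (A \<union> (if conjclass G (g (Suc n)) = c then {{Suc n}} else {}))"
    unfolding cnt_def using B by simp
  show ?thesis unfolding cB cA
    by (cases "conjclass G (g (Suc n)) = c") (simp_all add: fA notin)
qed

end

context group begin

lemma cnt_proj_nfix:
  assumes Z: "(g,s) \<in> Sn G (Suc n)" and nf: "s (Suc n) \<noteq> Suc n"
  shows "cnt G (Suc n) (g,s) c = cnt G n (proj G n (g,s)) c"
proof -
  have s: "s permutes {1..Suc n}" and g: "\<forall>i. g i \<in> carrier G" using Sn_props[OF Z] by auto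
  have inj: "inj s" using permutes_inj[OF s] .
  define P where "P = Suc n"
  define b where "b = s P"
  define a where "a = Hilbert_Choice.inv s P"
  define g' where "g' = (g(b := g b \<otimes> g P))(P := \<one>)"
  define s' where "s' = (s(a := b))(P := P)"
  have pj: "proj G n (g,s) = (g', s')"
    unfolding g'_def s'_def a_def b_def P_def using proj_nfix[of s n g, OF nf] by simp
  have Z': "(g',s') \<in> Sn G n" using proj_Sn[OF Z] pj by simp
  have s': "s' permutes {1..n}" and g': "\<forall>i. g' i \<in> carrier G" using Sn_props[OF Z'] by auto
  have bP: "b \<noteq> P" using nf unfolding b_def P_def by simp
  have sa: "s a = P" unfolding a_def using permutes_inverses(1)[OF s] .
  have aP: "a \<noteq> P" using sa nf unfolding P_def by auto
  have b_in: "b \<in> {1..n}" using permutes_in_image[OF s, of P] bP unfolding b_def P_def by auto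
  have "a \<in> {1..Suc n}" using permutes_in_image[OF s, of a] sa unfolding P_def by auto
  then have a_in: "a \<in> {1..n}" using aP unfolding P_def by auto
  have s'_other: "s' x = s x" if "x \<noteq> a" "x \<noteq> P" for x using that unfolding s'_def by simp
  have g'_other: "g' x = g x" if "x \<noteq> b" "x \<noteq> P" for x using that unfolding g'_def by simp
  define L where "L = cyclen s b"
  have L0: "0 < L" "(s^^L) b = b" unfolding L_def using cyclen_props[OF s] by auto
  have LS: "L = Suc (L - 1)" using L0 by simp
  have "s ((s^^(L-1)) b) = s P"
    using L0(2) LS by (metis b_def funpow.simps(2) o_apply)
  then have PL: "(s^^(L-1)) b = P" using inj by (simp add: inj_eq)
  have L2: "2 \<le> L"
  proof (rule ccontr)
    assume "\<not> 2 \<le> L" then have "L = 1" using L0 by simp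
    then show False using PL bP by simp
  qed
  have LS2: "L - 1 = Suc (L - 2)" using L2 by simp
  have "s ((s^^(L-2)) b) = s a" using PL LS2 sa by (metis funpow.simps(2) o_apply)
  then have aL: "(s^^(L-2)) b = a" using inj by (simp add: inj_eq)
  have dist: "k1 = k2" if "k1 < L" "k2 < L" "(s^^k1) b = (s^^k2) b" for k1 k2
    using funpow_distinct[OF s] that unfolding L_def by blast
  have nP: "(s^^k) b \<noteq> P" if "k < L - 1" for k
    using dist[of k "L-1"] PL that by auto
  have na: "(s^^k) b \<noteq> a" if "k < L - 2" for k
    using dist[of k "L-2"] aL that by auto
  have nb: "(s^^k) b \<noteq> b" if "0 < k" "k < L" for k
    using dist[of k 0] that by auto
  have c1: "(s'^^k) b = (s^^k) b" if "k \<le> L - 2" for k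
    using that
  proof (induction k)
    case 0 then show ?case by simp
  next
    case (Suc k)
    then have "(s'^^k) b = (s^^k) b" by simp
    moreover have "(s^^k) b \<noteq> a" "(s^^k) b \<noteq> P" using na nP Suc.prems by auto
    ultimately show ?case using s'_other by simp
  qed
  have c2: "(s'^^(L-1)) b = b"
  proof -
    have "(s'^^(L-1)) b = s' ((s'^^(L-2)) b)" using LS2 by simp
    also have "\<dots> = s' a" using c1[of "L-2"] aL by simp
    also have "\<dots> = b" unfolding s'_def using aP by simp
    finally show ?thesis .
  qed
  have c3: "cyclen s' b = L - 1"
    unfolding cyclen_def
  proof (rule Least_equality)
    show "0 < L - 1 \<and> (s' ^^ (L - 1)) b = b" using L2 c2 by simp
  next
    fix y assume y: "0 < y \<and> (s' ^^ y) b = b"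
    show "L - 1 \<le> y"
    proof (rule ccontr)
      assume "\<not> L - 1 \<le> y"
      then have "y \<le> L - 2" by simp
      then have "(s^^y) b = b" using c1 y by simp
      then show False using nb[of y] y \<open>y \<le> L - 2\<close> L2 by simp
    qed
  qed
  have c4: "cycle_of s' b = cycle_of s b - {P}"
  proof -
    have e1: "cycle_of s' b = {(s'^^k) b | k. k < L - 1}"
      using cycle_of_alt[of "L-1" s' b] L2 c2 by simp
    also have "\<dots> = {(s^^k) b | k. k < L - 1}"
    proof -
      have c1': "(s'^^k) b = (s^^k) b" if "k < L-1" for k using c1[of k] that LS2 by simp
      show ?thesis
      proof (intro Collect_cong ex_cong1)
        fix x k show "(x = (s'^^k) b \<and> k < L - 1) = (x = (s^^k) b \<and> k < L - 1)"
          using c1'[of k] by auto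
      qed
    qed
    finally have e1: "cycle_of s' b = {(s^^k) b | k. k < L - 1}" .
    have e2: "cycle_of s b = {(s^^k) b | k. k < L}" using cycle_of_alt[of L s b] L0 by simp
    show ?thesis
    proof (rule Set.set_eqI)
      fix x
      show "x \<in> cycle_of s' b \<longleftrightarrow> x \<in> cycle_of s b - {P}"
      proof
        assume "x \<in> cycle_of s' b"
        then obtain k where "k < L - 1" "x = (s^^k) b" using e1 by auto
        then show "x \<in> cycle_of s b - {P}" using e2 nP by auto
      next
        assume "x \<in> cycle_of s b - {P}"
        then obtain k where k: "k < L" "x = (s^^k) b" "x \<noteq> P" using e2 by auto
        then have "k \<noteq> L - 1" using PL by auto
        then have "k < L - 1" using k by simp
        then show "x \<in> cycle_of s' b" using e1 k by auto
      qed
    qed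
  qed
  have PcycB: "P \<in> cycle_of s b" using PL unfolding cycle_of_def by blast
  have c5: "cycle_color G (g',s') b = cycle_color G (g,s) b"
  proof -
    have clP: "cyclen s P = L" unfolding L_def using cyclen_funpow[OF inj, of "L-1" b] PL by simp
    have "cprod G g s P L = cprod G g s (s P) (L-1) \<otimes> g P"
      using cprod_Suc'[OF g, of s P "L-1"] LS by simp
    also have "\<dots> = (cprod G g s (s b) (L-2) \<otimes> g b) \<otimes> g P"
      using cprod_Suc'[OF g, of s b "L-2"] LS2 b_def by simp
    finally have e1: "cprod G g s P L = (cprod G g s (s b) (L-2) \<otimes> g b) \<otimes> g P" .
    have "cprod G g' s' b (L-1) = cprod G g' s' (s' b) (L-2) \<otimes> g' b"
      using cprod_Suc'[OF g', of s' b "L-2"] LS2 by simp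
    moreover have "g' b = g b \<otimes> g P" unfolding g'_def using bP by simp
    moreover have "cprod G g' s' (s' b) (L-2) = cprod G g s (s b) (L-2)"
    proof (rule cprod_cong, intro allI impI)
      fix k assume k: "k < L - 2"
      have "(s'^^k) (s' b) = (s'^^Suc k) b" by (simp add: funpow_swap1)
      also have "\<dots> = (s^^Suc k) b" using c1[of "Suc k"] k by simp
      finally have e: "(s'^^k) (s' b) = (s^^Suc k) b" .
      have "(s^^k) (s b) = (s^^Suc k) b" by (simp add: funpow_swap1)
      moreover have "(s^^Suc k) b \<noteq> b" using nb[of "Suc k"] k by simp
      moreover have "(s^^Suc k) b \<noteq> P" using nP[of "Suc k"] k by simp
      ultimately show "g' ((s'^^k) (s' b)) = g ((s^^k) (s b))" using e g'_other by simp
    qed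
    ultimately have "cprod G g' s' b (L-1) = cprod G g s (s b) (L-2) \<otimes> (g b \<otimes> g P)" by simp
    also have "\<dots> = cprod G g s P L" unfolding e1 using g cprod_carrier[OF g] by (simp add: m_assoc)
    finally have "cprod G g' s' b (L-1) = cprod G g s P L" .
    then have "cycle_color G (g',s') b = cycle_color G (g,s) P"
      unfolding cycle_color_def using c3 clP by simp
    also have "\<dots> = cycle_color G (g,s) b" using color_funpow[OF s g, of "L-1" b] PL by simp
    finally show ?thesis .
  qed
  have c6: "cycle_of s' i = cycle_of s i \<and> cycle_color G (g',s') i = cycle_color G (g,s) i"
    if i: "i \<in> {1..n}" "P \<notin> cycle_of s i" for i
  proof -
    have nPi: "(s^^k) i \<noteq> P" for k using i(2) unfolding cycle_of_def by blast
    have nai: "(s^^k) i \<noteq> a" for k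
    proof
      assume "(s^^k) i = a"
      then have "(s^^Suc k) i = P" using sa by simp
      then show False using nPi by blast
    qed
    have nbi: "(s^^k) i \<noteq> b" for k
    proof
      assume "(s^^k) i = b"
      then have "(s^^(L-1+k)) i = P" using PL by (simp add: funpow_add_apply)
      then show False using nPi by blast
    qed
    have eq: "(s'^^k) i = (s^^k) i" for k
    proof (induction k)
      case 0 then show ?case by simp
    next
      case (Suc k) then show ?case using s'_other nai nPi by simp
    qed
    have e1: "cycle_of s' i = cycle_of s i" unfolding cycle_of_def eq ..
    have e2: "cyclen s' i = cyclen s i" unfolding cyclen_def eq ..
    have "cprod G g' s' i (cyclen s i) = cprod G g s i (cyclen s i)"
      by (rule cprod_cong) (simp add: eq g'_other nbi nPi)
    then have "cycle_color G (g',s') i = cycle_color G (g,s) i"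
      unfolding cycle_color_def using e2 by simp
    then show ?thesis using e1 by simp
  qed
  have cycP: "cycle_of s P = cycle_of s b" using cycle_of_mem[OF s PcycB] .
  have c7: "cycle_of s' i = cycle_of s' b \<and> cycle_color G (g',s') i = cycle_color G (g',s') b
        \<and> cycle_of s i = cycle_of s b \<and> cycle_color G (g,s) i = cycle_color G (g,s) b"
    if i: "i \<in> {1..n}" "P \<in> cycle_of s i" for i
  proof -
    have e1: "cycle_of s i = cycle_of s b" using cycle_of_mem[OF s i(2)] cycP by simp
    have ib: "i \<in> cycle_of s b" using self_in_cycle_of[of i s] e1 by simp
    have "i \<noteq> P" using i(1) unfolding P_def by simp
    then have ib': "i \<in> cycle_of s' b" using c4 ib by simp
    have "cycle_of s' i = cycle_of s' b" by (rule cycle_of_mem[OF s' ib'])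
    moreover have "cycle_color G (g',s') i = cycle_color G (g',s') b" by (rule color_mem[OF s' g' ib'])
    moreover have "cycle_color G (g,s) i = cycle_color G (g,s) b" by (rule color_mem[OF s g ib])
    ultimately show ?thesis using e1 by blast
  qed
  define A where "A = {C. \<exists>i\<in>{1..n}. C = cycle_of s' i \<and> cycle_color G (g',s') i = c}"
  define B where "B = {C. \<exists>i\<in>{1..Suc n}. C = cycle_of s i \<and> cycle_color G (g,s) i = c}"
  have AB: "A = (\<lambda>C. C - {P}) ` B"
  proof (rule Set.set_eqI, rule iffI)
    fix x assume "x \<in> A"
    then obtain i where i: "i \<in> {1..n}" "x = cycle_of s' i" "cycle_color G (g',s') i = c"
      unfolding A_def by blast
    show "x \<in> (\<lambda>C. C - {P}) ` B"
    proof (cases "P \<in> cycle_of s i")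
      case False
      note c = c6[OF i(1) False]
      have "cycle_of s i \<in> B" unfolding B_def using i c by auto
      moreover have "x = cycle_of s i - {P}" using i(2) c False by simp
      ultimately show ?thesis by blast
    next
      case True
      note c = c7[OF i(1) True]
      have "cycle_of s b \<in> B" unfolding B_def using i c c5 b_in by auto
      moreover have "x = cycle_of s b - {P}" using i(2) c c4 by simp
      ultimately show ?thesis by blast
    qed
  next
    fix x assume "x \<in> (\<lambda>C. C - {P}) ` B"
    then obtain y i where y: "x = y - {P}" "i \<in> {1..Suc n}" "y = cycle_of s i" "cycle_color G (g,s) i = c"
      unfolding B_def by blast
    show "x \<in> A"
    proof (cases "P \<in> cycle_of s i")
      case False
      then have "i \<noteq> P" using self_in_cycle_of[of i s] by blast
      then have iin: "i \<in> {1..n}" using y(2) unfolding P_def by auto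
      note c = c6[OF iin False]
      have "x = cycle_of s' i" using y c False by simp
      then show ?thesis unfolding A_def using iin c y by auto
    next
      case True
      have e1: "cycle_of s i = cycle_of s b" using cycle_of_mem[OF s True] cycP by simp
      have ib: "i \<in> cycle_of s b" using self_in_cycle_of[of i s] e1 by simp
      have "x = cycle_of s' b" using y e1 c4 by simp
      moreover have "cycle_color G (g',s') b = c" using c5 color_mem[OF s g ib] y by simp
      ultimately show ?thesis unfolding A_def using b_in by auto
    qed
  qed
  have injB: "inj_on (\<lambda>C. C - {P}) B"
  proof (rule inj_onI)
    fix x y assume x: "x \<in> B" and y: "y \<in> B" and xy: "x - {P} = y - {P}"
    obtain i where i: "x = cycle_of s i" using x unfolding B_def by blast
    obtain i' where i': "y = cycle_of s i'" using y unfolding B_def by blast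
    obtain j where j: "j \<in> x - {P}"
    proof (cases "i = P")
      case True
      have "(s^^1) P = b" by (simp add: b_def)
      then have "b \<in> cycle_of s P" unfolding cycle_of_def by blast
      then show ?thesis using that[of b] i True bP by simp
    next
      case False
      then show ?thesis using that[of i] i self_in_cycle_of[of i s] by simp
    qed
    then have jy: "j \<in> y" using xy by blast
    have "cycle_of s j = cycle_of s i" by (rule cycle_of_mem[OF s]) (use j i in blast)
    moreover have "cycle_of s j = cycle_of s i'" by (rule cycle_of_mem[OF s]) (use jy i' in blast)
    ultimately show "x = y" using i i' by simp
  qed
  have "cnt G (Suc n) (g,s) c = card B" unfolding cnt_def B_def by simp
  also have "\<dots> = card A" unfolding AB using card_image[OF injB] by simp
  also have "\<dots> = cnt G n (proj G n (g,s)) c" unfolding pj cnt_def A_def by simp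
  finally show ?thesis .
qed

end

context group begin

lemma Sn_outside: "(g,s) \<in> Sn G N \<Longrightarrow> i \<notin> {1..N} \<Longrightarrow> g i = \<one>"
  unfolding Sn_def by auto

lemma SnI: "s permutes {1..N} \<Longrightarrow> (\<And>i. g i \<in> carrier G) \<Longrightarrow> (\<And>i. i \<notin> {1..N} \<Longrightarrow> g i = \<one>)
   \<Longrightarrow> (g,s) \<in> Sn G N"
  unfolding Sn_def by auto

lemma Sn_mono: "N \<le> N' \<Longrightarrow> x \<in> Sn G N \<Longrightarrow> x \<in> Sn G N'"
proof -
  assume NN: "N \<le> N'" and x: "x \<in> Sn G N"
  obtain g s where gs: "x = (g,s)" by fastforce
  have s: "s permutes {1..N}" and g: "\<And>i. g i \<in> carrier G" using Sn_props x gs by auto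
  show ?thesis unfolding gs
  proof (rule SnI)
    show "s permutes {1..N'}" using permutes_subset[OF s] NN by auto
    show "g i \<in> carrier G" for i by (rule g)
    show "g i = \<one>" if "i \<notin> {1..N'}" for i using Sn_outside[of g s N i] x gs that NN by auto
  qed
qed

lemma wr_mult_Sn:
  assumes A: "(h,t) \<in> Sn G N" and B: "(g,s) \<in> Sn G N"
  shows "wr_mult G (h,t) (g,s) \<in> Sn G N"
proof -
  have t: "t permutes {1..N}" and h: "\<And>i. h i \<in> carrier G" using Sn_props[OF A] by auto
  have s: "s permutes {1..N}" and g: "\<And>i. g i \<in> carrier G" using Sn_props[OF B] by auto
  have ti: "Hilbert_Choice.inv t permutes {1..N}" by (rule permutes_inv[OF t])
  show ?thesis unfolding wr_mult_def fst_conv snd_conv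
  proof (rule SnI)
    show "t \<circ> s permutes {1..N}" by (rule permutes_compose[OF s t])
    show "h i \<otimes> g (Hilbert_Choice.inv t i) \<in> carrier G" for i using h g by simp
    show "h i \<otimes> g (Hilbert_Choice.inv t i) = \<one>" if "i \<notin> {1..N}" for i
      using that permutes_not_in[OF ti that] Sn_outside[OF A that] Sn_outside[OF B that] by simp
  qed
qed

lemma wr_inv_Sn:
  assumes A: "(h,t) \<in> Sn G N" shows "wr_inv G (h,t) \<in> Sn G N"
proof -
  have t: "t permutes {1..N}" and h: "\<And>i. h i \<in> carrier G" using Sn_props[OF A] by auto
  have e: "wr_inv G (h,t) = (\<lambda>j. inv (h (t j)), Hilbert_Choice.inv t)" unfolding wr_inv_def by simp
  show ?thesis unfolding e
  proof (rule SnI)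
    show "Hilbert_Choice.inv t permutes {1..N}" by (rule permutes_inv[OF t])
    show "inv (h (t i)) \<in> carrier G" for i using h by simp
    show "inv (h (t i)) = \<one>" if "i \<notin> {1..N}" for i
      using permutes_not_in[OF t that] Sn_outside[OF A that] by simp
  qed
qed

lemma proj_mult_left:
  assumes A: "(h,t) \<in> Sn G n" and B: "(g,s) \<in> Sn G (Suc n)"
  shows "proj G n (wr_mult G (h,t) (g,s)) = wr_mult G (h,t) (proj G n (g,s))"
proof -
  have t: "t permutes {1..n}" and h: "\<And>i. h i \<in> carrier G" using Sn_props[OF A] by auto
  have s: "s permutes {1..Suc n}" and g: "\<And>i. g i \<in> carrier G" using Sn_props[OF B] by auto
  define ti where "ti = Hilbert_Choice.inv t"
  have tti: "t (ti x) = x" "ti (t x) = x" for x unfolding ti_def using permutes_inverses[OF t] by auto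
  have tP: "t (Suc n) = Suc n" using permutes_not_in[OF t] by simp
  have tiP: "ti (Suc n) = Suc n" using tti(2)[of "Suc n"] tP by simp
  have hP: "h (Suc n) = \<one>" using Sn_outside[OF A] by simp
  have injt: "inj t" using permutes_inj[OF t] .
  have tne: "t x \<noteq> Suc n" if "x \<noteq> Suc n" for x
  proof
    assume "t x = Suc n" then have "t x = t (Suc n)" using tP by simp
    then show False using injD[OF injt] that by blast
  qed
  have tine: "ti x \<noteq> y" if "x \<noteq> t y" for x y
  proof
    assume "ti x = y" then have "t (ti x) = t y" by simp
    then show False using tti(1)[of x] that by simp
  qed
  have WM: "wr_mult G (h,t) (g,s) = (\<lambda>i. h i \<otimes> g (ti i), t \<circ> s)" for g s
    unfolding wr_mult_def ti_def by simp
  show ?thesis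
  proof (cases "s (Suc n) = Suc n")
    case True
    have u: "(t \<circ> s) (Suc n) = Suc n" using True tP by simp
    have "(\<lambda>i. h i \<otimes> g (ti i))(Suc n := \<one>) = (\<lambda>i. h i \<otimes> (g(Suc n := \<one>)) (ti i))"
    proof (rule ext)
      fix i show "((\<lambda>i. h i \<otimes> g (ti i))(Suc n := \<one>)) i = h i \<otimes> (g(Suc n := \<one>)) (ti i)"
      proof (cases "i = Suc n")
        case True then show ?thesis using tiP hP by simp
      next
        case False
        have "ti i \<noteq> Suc n" using tine[of i "Suc n"] False tP by simp
        then show ?thesis using False by simp
      qed
    qed
    then show ?thesis unfolding WM proj_fix[of "t \<circ> s", OF u] proj_fix[of s n g, OF True] by simp
  next
    case False
    define b where "b = s (Suc n)"
    define a where "a = Hilbert_Choice.inv s (Suc n)"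
    have sa: "s a = Suc n" unfolding a_def using permutes_inverses(1)[OF s] .
    have bP: "b \<noteq> Suc n" using False b_def by simp
    have aP: "a \<noteq> Suc n" using sa False by auto
    have u: "(t \<circ> s) (Suc n) \<noteq> Suc n" using tne[OF False] by simp
    have ua: "Hilbert_Choice.inv (t \<circ> s) (Suc n) = a"
      by (rule inv_f_eq) (use injt permutes_inj[OF s] sa tP in \<open>auto simp: inj_compose\<close>)
    have tbP: "t b \<noteq> Suc n" using tne[OF bP] .
    have e1: "((\<lambda>i. h i \<otimes> g (ti i))(t b := h (t b) \<otimes> g (ti (t b)) \<otimes> (h (Suc n) \<otimes> g (ti (Suc n))), Suc n := \<one>))
            = (\<lambda>i. h i \<otimes> (g(b := g b \<otimes> g (Suc n), Suc n := \<one>)) (ti i))"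
    proof (rule ext)
      fix i
      show "((\<lambda>i. h i \<otimes> g (ti i))(t b := h (t b) \<otimes> g (ti (t b)) \<otimes> (h (Suc n) \<otimes> g (ti (Suc n))), Suc n := \<one>)) i
            = h i \<otimes> (g(b := g b \<otimes> g (Suc n), Suc n := \<one>)) (ti i)"
      proof (cases "i = Suc n")
        case True then show ?thesis using tiP hP by simp
      next
        case F1: False
        show ?thesis
        proof (cases "i = t b")
          case True then show ?thesis using F1 tti bP tiP hP h g by (simp add: m_assoc)
        next
          case False
          have "ti i \<noteq> Suc n" using tine[of i "Suc n"] F1 tP by simp
          moreover have "ti i \<noteq> b" using tine[of i b] False by simp
          ultimately show ?thesis using F1 False by simp
        qed
      qed
    qed
    have e2: "(t \<circ> s)(a := t b, Suc n := Suc n) = t \<circ> s(a := b, Suc n := Suc n)"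
      using tP by (simp add: fun_eq_iff)
    show ?thesis unfolding WM proj_nfix[of "t \<circ> s", OF u] proj_nfix[of s n g, OF False] ua
      unfolding a_def[symmetric] b_def[symmetric] o_apply e2[symmetric] using e1 by simp
  qed
qed

lemma proj_mult_right:
  assumes A: "(h,t) \<in> Sn G n" and B: "(g,s) \<in> Sn G (Suc n)"
  shows "proj G n (wr_mult G (g,s) (h,t)) = wr_mult G (proj G n (g,s)) (h,t)"
proof -
  have t: "t permutes {1..n}" and h: "\<And>i. h i \<in> carrier G" using Sn_props[OF A] by auto
  have s: "s permutes {1..Suc n}" and g: "\<And>i. g i \<in> carrier G" using Sn_props[OF B] by auto
  define ti where "ti = Hilbert_Choice.inv t"
  define si where "si = Hilbert_Choice.inv s"
  have tti: "t (ti x) = x" "ti (t x) = x" for x unfolding ti_def using permutes_inverses[OF t] by auto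
  have ssi: "s (si x) = x" "si (s x) = x" for x unfolding si_def using permutes_inverses[OF s] by auto
  have tP: "t (Suc n) = Suc n" using permutes_not_in[OF t] by simp
  have hP: "h (Suc n) = \<one>" using Sn_outside[OF A] by simp
  have injt: "inj t" using permutes_inj[OF t] .
  have injs: "inj s" using permutes_inj[OF s] .
  have tne: "t x \<noteq> Suc n" if "x \<noteq> Suc n" for x
  proof
    assume "t x = Suc n" then have "t x = t (Suc n)" using tP by simp
    then show False using injD[OF injt] that by blast
  qed
  have WM: "wr_mult G (g',s') (h,t) = (\<lambda>i. g' i \<otimes> h (Hilbert_Choice.inv s' i), s' \<circ> t)" for g' s'
    unfolding wr_mult_def by simp
  show ?thesis
  proof (cases "s (Suc n) = Suc n")
    case True
    have u: "(s \<circ> t) (Suc n) = Suc n" using True tP by simp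
    have siP: "si (Suc n) = Suc n" using ssi(2)[of "Suc n"] True by simp
    have "(\<lambda>i. g i \<otimes> h (si i))(Suc n := \<one>) = (\<lambda>i. (g(Suc n := \<one>)) i \<otimes> h (si i))"
    proof (rule ext)
      fix i show "((\<lambda>i. g i \<otimes> h (si i))(Suc n := \<one>)) i = (g(Suc n := \<one>)) i \<otimes> h (si i)"
        using siP hP by (cases "i = Suc n") simp_all
    qed
    then show ?thesis unfolding WM proj_fix[of "s \<circ> t", OF u] proj_fix[of s n g, OF True] si_def
      by simp
  next
    case False
    define b where "b = s (Suc n)"
    define a where "a = si (Suc n)"
    have sa: "s a = Suc n" unfolding a_def using ssi by simp
    have bP: "b \<noteq> Suc n" using False b_def by simp
    have aP: "a \<noteq> Suc n" using sa False by auto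
    have sib: "si b = Suc n" unfolding b_def using ssi by simp
    have u: "(s \<circ> t) (Suc n) \<noteq> Suc n" using False tP by simp
    have ua: "Hilbert_Choice.inv (s \<circ> t) (Suc n) = ti a"
      by (rule inv_f_eq) (use injt injs sa tti in \<open>auto simp: inj_compose\<close>)
    have tia: "ti a \<noteq> Suc n"
    proof
      assume "ti a = Suc n" then have "t (ti a) = t (Suc n)" by simp
      then show False using tti(1)[of a] tP aP by simp
    qed
    define s'' where "s'' = s(a := b, Suc n := Suc n)"
    have pj: "proj G n (g,s) = (g(b := g b \<otimes> g (Suc n), Suc n := \<one>), s'')"
      unfolding proj_nfix[of s n g, OF False] s''_def a_def b_def si_def by simp
    have s'': "s'' permutes {1..n}" using Sn_props(1)[of _ s'' n] proj_Sn[OF B] pj by simp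
    have injs'': "inj s''" using permutes_inj[OF s''] .
    have isb: "Hilbert_Choice.inv s'' b = a"
      by (rule inv_f_eq[OF injs'']) (simp add: s''_def aP)
    have isP: "Hilbert_Choice.inv s'' (Suc n) = Suc n"
      by (rule inv_f_eq[OF injs'']) (simp add: s''_def)
    have iso: "Hilbert_Choice.inv s'' i = si i" if "i \<noteq> b" "i \<noteq> Suc n" for i
    proof (rule inv_f_eq[OF injs''])
      have "si i \<noteq> a" using that ssi(1)[of i] sa by metis
      moreover have "si i \<noteq> Suc n" using that ssi(1)[of i] b_def by metis
      ultimately show "s'' (si i) = i" unfolding s''_def using ssi by simp
    qed
    have e1: "(\<lambda>i. g i \<otimes> h (si i))(b := g b \<otimes> h (si b) \<otimes> (g (Suc n) \<otimes> h (si (Suc n))), Suc n := \<one>)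
        = (\<lambda>i. (g(b := g b \<otimes> g (Suc n), Suc n := \<one>)) i \<otimes> h (Hilbert_Choice.inv s'' i))"
    proof (rule ext)
      fix i
      show "((\<lambda>i. g i \<otimes> h (si i))(b := g b \<otimes> h (si b) \<otimes> (g (Suc n) \<otimes> h (si (Suc n))), Suc n := \<one>)) i
        = (g(b := g b \<otimes> g (Suc n), Suc n := \<one>)) i \<otimes> h (Hilbert_Choice.inv s'' i)"
      proof (cases "i = Suc n")
        case True then show ?thesis using isP hP by simp
      next
        case F1: False
        show ?thesis
        proof (cases "i = b")
          case True then show ?thesis using F1 isb sib hP h g a_def by (simp add: m_assoc)
        next
          case False then show ?thesis using F1 iso by simp
        qed
      qed
    qed
    have e2: "(s \<circ> t)(ti a := b, Suc n := Suc n) = s'' \<circ> t"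
    proof (rule ext)
      fix j show "((s \<circ> t)(ti a := b, Suc n := Suc n)) j = (s'' \<circ> t) j"
      proof (cases "j = Suc n")
        case True then show ?thesis using tP by (simp add: s''_def)
      next
        case F1: False
        show ?thesis
        proof (cases "j = ti a")
          case True then show ?thesis using F1 tti aP by (simp add: s''_def)
        next
          case False
          have "t j \<noteq> a" using False tti(2)[of j] by metis
          then show ?thesis using F1 False tne[OF F1] by (simp add: s''_def)
        qed
      qed
    qed
    have stP: "(s \<circ> t) (Suc n) = b" using tP b_def by simp
    show ?thesis unfolding pj WM proj_nfix[of "s \<circ> t", OF u] ua stP si_def[symmetric] e2
      using e1 by simp
  qed
qed

end

primrec down :: "('a,'b) monoid_scheme \<Rightarrow> nat \<Rightarrow> 'a wr \<Rightarrow> nat \<Rightarrow> 'a wr" where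
  "down G N z 0 = z"
| "down G N z (Suc j) = proj G (N - Suc j) (down G N z j)"

context group begin

lemma cnt_proj:
  assumes Z: "Z \<in> Sn G (Suc n)"
  shows "cnt G (Suc n) Z c = cnt G n (proj G n Z) c
     + (if snd Z (Suc n) = Suc n \<and> conjclass G (fst Z (Suc n)) = c then 1 else 0)"
proof -
  obtain g s where gs: "Z = (g,s)" by fastforce
  show ?thesis
  proof (cases "s (Suc n) = Suc n")
    case True then show ?thesis using cnt_proj_fix[of g s n c] Z gs by simp
  next
    case False then show ?thesis using cnt_proj_nfix[of g s n c] Z gs by simp
  qed
qed

lemma wr_mult_Sn': "A \<in> Sn G N \<Longrightarrow> B \<in> Sn G N \<Longrightarrow> wr_mult G A B \<in> Sn G N"
  using wr_mult_Sn by (cases A, cases B) simp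

lemma wr_inv_Sn': "A \<in> Sn G N \<Longrightarrow> wr_inv G A \<in> Sn G N"
  using wr_inv_Sn by (cases A) simp

lemma proj_Sn': "Z \<in> Sn G (Suc n) \<Longrightarrow> proj G n Z \<in> Sn G n"
  using proj_Sn by (cases Z) simp

lemma proj_mult_left': "A \<in> Sn G n \<Longrightarrow> B \<in> Sn G (Suc n) \<Longrightarrow>
    proj G n (wr_mult G A B) = wr_mult G A (proj G n B)"
  using proj_mult_left by (cases A, cases B) simp

lemma proj_mult_right': "A \<in> Sn G n \<Longrightarrow> B \<in> Sn G (Suc n) \<Longrightarrow>
    proj G n (wr_mult G B A) = wr_mult G (proj G n B) A"
  using proj_mult_right by (cases A, cases B) simp

lemma M_proj:
  assumes w1: "w1 \<in> Sn G k" and w2: "w2 \<in> Sn G k" and X: "X \<in> Sn G (Suc k)"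
  shows "proj G k (wr_mult G (wr_mult G (wr_inv G w2) X) w1)
       = wr_mult G (wr_mult G (wr_inv G w2) (proj G k X)) w1"
proof -
  have i2: "wr_inv G w2 \<in> Sn G k" by (rule wr_inv_Sn'[OF w2])
  have "wr_inv G w2 \<in> Sn G (Suc k)" using Sn_mono[OF _ i2] by simp
  then have B: "wr_mult G (wr_inv G w2) X \<in> Sn G (Suc k)" using wr_mult_Sn' X by simp
  show ?thesis using proj_mult_right'[OF w1 B] proj_mult_left'[OF i2 X] by simp
qed

lemma M_delta:
  assumes w1: "(h1,t1) \<in> Sn G k" and w2: "(h2,t2) \<in> Sn G k" and X: "(g,s) \<in> Sn G (Suc k)"
  defines "Y \<equiv> wr_mult G (wr_mult G (wr_inv G (h2,t2)) (g,s)) (h1,t1)"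
  shows "snd Y (Suc k) = Suc k \<longleftrightarrow> s (Suc k) = Suc k"
    and "s (Suc k) = Suc k \<Longrightarrow> fst Y (Suc k) = g (Suc k)"
proof -
  have t1: "t1 permutes {1..k}" and t2: "t2 permutes {1..k}" using Sn_props w1 w2 by auto
  have s: "s permutes {1..Suc k}" and g: "\<And>i. g i \<in> carrier G" using Sn_props[OF X] by auto
  have t2i: "Hilbert_Choice.inv t2 permutes {1..k}" by (rule permutes_inv[OF t2])
  have t1P: "t1 (Suc k) = Suc k" and t2P: "t2 (Suc k) = Suc k" and t2iP: "Hilbert_Choice.inv t2 (Suc k) = Suc k"
    using permutes_not_in[OF t1] permutes_not_in[OF t2] permutes_not_in[OF t2i] by auto
  have h1P: "h1 (Suc k) = \<one>" and h2P: "h2 (Suc k) = \<one>" using Sn_outside w1 w2 by auto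
  have sndY: "snd Y = Hilbert_Choice.inv t2 \<circ> s \<circ> t1"
    unfolding Y_def wr_mult_def wr_inv_def by (simp add: o_assoc)
  show "snd Y (Suc k) = Suc k \<longleftrightarrow> s (Suc k) = Suc k"
    unfolding sndY using t1P permutes_inv_eq[OF t2, of "s (Suc k)" "Suc k"] t2P by auto
  assume fx: "s (Suc k) = Suc k"
  have injc: "inj (Hilbert_Choice.inv t2 \<circ> s)"
    using permutes_inj[OF permutes_compose[OF s permutes_subset[OF t2i]]] by simp
  have e1: "Hilbert_Choice.inv (Hilbert_Choice.inv t2 \<circ> s) (Suc k) = Suc k"
    by (rule inv_f_eq[OF injc]) (simp add: fx t2iP)
  have e2: "Hilbert_Choice.inv (Hilbert_Choice.inv t2) (Suc k) = Suc k"
    by (rule inv_f_eq[OF permutes_inj[OF t2i]]) (simp add: t2iP)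
  show "fst Y (Suc k) = g (Suc k)"
    unfolding Y_def wr_mult_def wr_inv_def using e1 e2 t2P h1P h2P g by simp
qed

end

context group begin

lemma act_props:
  assumes x: "x \<in> frakS G" and W1: "w1 \<in> Sn G N" and W2: "w2 \<in> Sn G N" and N1: "1 \<le> N"
  shows "act G x (w1,w2) \<in> frakS G \<and> (\<forall>k\<ge>1. w1 \<in> Sn G k \<and> w2 \<in> Sn G k \<longrightarrow>
           act G x (w1,w2) k = wr_mult G (wr_mult G (wr_inv G w2) (x k)) w1)"
proof -
  define Q where "Q k \<longleftrightarrow> 1 \<le> k \<and> w1 \<in> Sn G k \<and> w2 \<in> Sn G k" for k
  define N0 where "N0 = (LEAST k. Q k)"
  have "Q N" unfolding Q_def using W1 W2 N1 by simp
  then have QN0: "Q N0" unfolding N0_def by (rule LeastI)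
  have N0le: "N0 \<le> k" if "Q k" for k unfolding N0_def using that by (rule Least_le)
  have Qge: "Q k" if "N0 \<le> k" for k using QN0 that Sn_mono[of N0 k] unfolding Q_def by auto
  have N01: "1 \<le> N0" using QN0 unfolding Q_def by simp
  define M where "M k = wr_mult G (wr_mult G (wr_inv G w2) (x k)) w1" for k
  have xS: "x k \<in> Sn G k" if "1 \<le> k" for k using x that unfolding frakS_def by auto
  have xP: "proj G k (x (Suc k)) = x k" if "1 \<le> k" for k using x that unfolding frakS_def by auto
  have MS: "M k \<in> Sn G k" if "N0 \<le> k" for k
    using Qge[OF that] xS[of k] wr_mult_Sn' wr_inv_Sn' unfolding M_def Q_def by simp
  have Mproj: "proj G k (M (Suc k)) = M k" if "N0 \<le> k" for k
  proof -
    have "1 \<le> k" using that N01 by simp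
    then show ?thesis using M_proj[of w1 k w2 "x (Suc k)"] Qge[OF that] xS[of "Suc k"] xP[of k]
      unfolding M_def Q_def by simp
  qed
  have downS: "down G N0 (M N0) j \<in> Sn G (N0 - j)" if "j \<le> N0" for j
    using that
  proof (induction j)
    case 0 then show ?case using MS by simp
  next
    case (Suc j)
    then have "down G N0 (M N0) j \<in> Sn G (Suc (N0 - Suc j))" using Suc_diff_Suc by simp
    then show ?case using proj_Sn' by simp
  qed
  define y where "y k = (if k = 0 then x 0 else if N0 \<le> k then M k else down G N0 (M N0) (N0 - k))" for k
  define PP where "PP y \<longleftrightarrow> y \<in> frakS G \<and> y 0 = x 0 \<and>
      (\<forall>n\<ge>1. w1 \<in> Sn G n \<and> w2 \<in> Sn G n \<longrightarrow> y n = M n)" for y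
  have Py: "PP y"
    unfolding PP_def
  proof (intro conjI allI impI)
    show "y \<in> frakS G" unfolding frakS_def
    proof (intro CollectI conjI allI impI)
      fix n :: nat assume n: "1 \<le> n"
      show "y n \<in> Sn G n"
      proof (cases "N0 \<le> n")
        case True then show ?thesis using MS n unfolding y_def by simp
      next
        case False then show ?thesis using downS[of "N0 - n"] n unfolding y_def by simp
      qed
      show "proj G n (y (n+1)) = y n"
      proof (cases "N0 \<le> n")
        case True then show ?thesis using Mproj n unfolding y_def by simp
      next
        case False
        show ?thesis
        proof (cases "Suc n = N0")
          case True
          then have "N0 - n = Suc 0" "N0 - Suc 0 = n" by auto
          then show ?thesis using True False n unfolding y_def by simp
        next
          case F2: False
          then have e: "N0 - n = Suc (N0 - Suc n)" using False by simp
          have e2: "N0 - Suc (N0 - Suc n) = n" using False F2 by simp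
          show ?thesis using False F2 n e e2 unfolding y_def by simp
        qed
      qed
    qed
    show "y 0 = x 0" unfolding y_def by simp
    fix n :: nat assume "1 \<le> n" "w1 \<in> Sn G n \<and> w2 \<in> Sn G n"
    then have "N0 \<le> n" using N0le unfolding Q_def by simp
    then show "y n = M n" using N01 unfolding y_def by simp
  qed
  have uniq: "y' = y" if "PP y'" for y'
  proof
    fix k
    have y'S: "proj G n (y' (Suc n)) = y' n" if "1 \<le> n" for n
      using \<open>PP y'\<close> that unfolding PP_def frakS_def by auto
    have yS: "proj G n (y (Suc n)) = y n" if "1 \<le> n" for n
      using Py that unfolding PP_def frakS_def by auto
    have y'M: "y' n = M n" if "N0 \<le> n" for n using \<open>PP y'\<close> Qge[OF that] unfolding PP_def Q_def by auto
    have yM: "y n = M n" if "N0 \<le> n" for n using that N01 unfolding y_def by simp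
    have ind: "\<forall>k. k + d = N0 \<longrightarrow> 1 \<le> k \<longrightarrow> y' k = y k" for d
    proof (induction d)
      case 0 then show ?case using y'M yM by simp
    next
      case (Suc d)
      show ?case
      proof (intro allI impI)
        fix k assume k: "k + Suc d = N0" "1 \<le> k"
        then have "y' (Suc k) = y (Suc k)" using Suc.IH by simp
        then show "y' k = y k" using y'S[OF k(2)] yS[OF k(2)] by simp
      qed
    qed
    show "y' k = y k"
    proof (cases "k = 0")
      case True then show ?thesis using \<open>PP y'\<close> Py unfolding PP_def by simp
    next
      case False
      show ?thesis
      proof (cases "N0 \<le> k")
        case True then show ?thesis using y'M yM by simp
      next
        case F2: False
        then show ?thesis using ind[of "N0 - k"] False by simp
      qed
    qed
  qed
  have ex1: "\<exists>!y. PP y" using Py uniq by blast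
  have "act G x (w1,w2) = (THE y. PP y)" unfolding act_def PP_def M_def by simp
  then have "PP (act G x (w1,w2))" using theI'[OF ex1] by simp
  then show ?thesis unfolding PP_def M_def by simp
qed

end

theorem proposition4p2:
  fixes G :: "('a, 'b) monoid_scheme" and T :: "'a topology"
    and x :: "nat \<Rightarrow> 'a wr" and w1 w2 :: "'a wr" and c :: "'a set" and n m :: nat
  assumes "compact_group G T"
    and "x \<in> frakS G"
    and "w1 \<in> Sinf G" and "w2 \<in> Sinf G"
    and "c \<in> conj_classes G"
    and "1 \<le> n" and "w1 \<in> Sn G n" and "w2 \<in> Sn G n"
    and "1 \<le> m" and "w1 \<in> Sn G m" and "w2 \<in> Sn G m"
  shows "int (cnt G n (act G x (w1, w2) n) c) - int (cnt G n (x n) c)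
       = int (cnt G m (act G x (w1, w2) m) c) - int (cnt G m (x m) c)"
proof -
  have grp: "group G" using assms(1) unfolding compact_group_def by simp
  interpret group G by (rule grp)
  define y where "y = act G x (w1, w2)"
  have ap: "y \<in> frakS G \<and> (\<forall>k\<ge>1. w1 \<in> Sn G k \<and> w2 \<in> Sn G k \<longrightarrow>
           y k = wr_mult G (wr_mult G (wr_inv G w2) (x k)) w1)"
    unfolding y_def by (rule act_props[OF assms(2) assms(7) assms(8) assms(6)])
  define D where "D k = int (cnt G k (y k) c) - int (cnt G k (x k) c)" for k
  have step: "D (Suc k) = D k" if k: "1 \<le> k" "w1 \<in> Sn G k" "w2 \<in> Sn G k" for k
  proof -
    have xS: "x (Suc k) \<in> Sn G (Suc k)" using assms(2) unfolding frakS_def by auto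
    have xP: "proj G k (x (Suc k)) = x k" using assms(2) k(1) unfolding frakS_def by auto
    have yS: "y (Suc k) \<in> Sn G (Suc k)" using ap unfolding frakS_def by auto
    have yP: "proj G k (y (Suc k)) = y k" using ap k(1) unfolding frakS_def by auto
    have kS: "w1 \<in> Sn G (Suc k)" "w2 \<in> Sn G (Suc k)" using Sn_mono[of k "Suc k"] k by auto
    have yM: "y (Suc k) = wr_mult G (wr_mult G (wr_inv G w2) (x (Suc k))) w1" using ap kS by simp
    obtain h1 t1 where w1e: "w1 = (h1,t1)" by fastforce
    obtain h2 t2 where w2e: "w2 = (h2,t2)" by fastforce
    obtain g s where xe: "x (Suc k) = (g,s)" by fastforce
    note md = M_delta[of h1 t1 k h2 t2 g s]
    have delta: "(if snd (y (Suc k)) (Suc k) = Suc k \<and> conjclass G (fst (y (Suc k)) (Suc k)) = c then 1 else 0)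
       = (if snd (x (Suc k)) (Suc k) = Suc k \<and> conjclass G (fst (x (Suc k)) (Suc k)) = c then 1 else (0::nat))"
      using md k xS unfolding yM w1e w2e xe by auto
    show ?thesis unfolding D_def
      using cnt_proj[OF yS, of c] cnt_proj[OF xS, of c] xP yP delta by simp
  qed
  have gen: "D (n + j) = D n" for j
  proof (induction j)
    case 0 then show ?case by simp
  next
    case (Suc j)
    have "w1 \<in> Sn G (n + j)" "w2 \<in> Sn G (n + j)" using Sn_mono[of n "n + j"] assms(7,8) by auto
    then have "D (Suc (n + j)) = D (n + j)" using step assms(6) by simp
    then show ?case using Suc by simp
  qed
  have "D n = D m"
  proof (cases "n \<le> m")
    case True then show ?thesis using gen[of "m - n"] by simp
  next
    case False
    have gen': "D (m + j) = D m" for j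
    proof (induction j)
      case 0 then show ?case by simp
    next
      case (Suc j)
      have "w1 \<in> Sn G (m + j)" "w2 \<in> Sn G (m + j)" using Sn_mono[of m "m + j"] assms(10,11) by auto
      then have "D (Suc (m + j)) = D (m + j)" using step assms(9) by simp
      then show ?case using Suc by simp
    qed
    show ?thesis using gen'[of "n - m"] False by simp
  qed
  then show ?thesis unfolding D_def y_def .
qed


end
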